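(* Let ${\sf S}_2(n,\ell)$ denote the number of $2$-noncrossing RNA structures (RNA secondary structures) on $\{1,\dots,n\}$ with exactly $\ell$ isolated vertices. If $n-\ell$ is a positive even integer, then $$ {\sf S}_2(n,\ell)=\frac{2}{n-\ell}\binom{\frac{n+\ell}{2}}{\frac{n-\ell}{2}+1}\binom{\frac{n+\ell}{2}-1}{\frac{n-\ell}{2}-1}. $$ Furthermore, for all integers $n\ge 2$ and $\ell\ge 0$ (with ${\sf S}_2(m,\ell)=0$ whenever $\ell>m$), $$ (n-\ell)(n-\ell+2)\,{\sf S}_2(n,\ell)-(n+\ell)(n+\ell-2)\,{\sf S}_2(n-2,\ell)=0. $$
   Context: A digraph on $\{1,\dots,n\}$ is a set of arcs $(i,j)$ with $1\le i<j\le n$. A $2$-noncrossing digraph is one in which every vertex lies in at most one arc and there are no two arcs $(i_1,j_1),(i_2,j_2)$ with $i_1<i_2<j_1<j_2$. A vertex is isolated if it lies in no arc. A $2$-noncrossing RNA structure is a $2$-noncrossing digraph with no arc of the form $(i,i+1)$. *)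

theory Defs
  imports Complex_Main
begin

definition digraph_on :: "nat \<Rightarrow> (nat \<times> nat) set \<Rightarrow> bool" where
  "digraph_on n A \<longleftrightarrow> (\<forall>(i,j)\<in>A. 1 \<le> i \<and> i < j \<and> j \<le> n)"

definition in_arc :: "nat \<Rightarrow> nat \<times> nat \<Rightarrow> bool" where
  "in_arc v a \<longleftrightarrow> v = fst a \<or> v = snd a"

definition two_noncrossing :: "nat \<Rightarrow> (nat \<times> nat) set \<Rightarrow> bool" where
  "two_noncrossing n A \<longleftrightarrow> digraph_on n A
     \<and> (\<forall>v. \<forall>a\<in>A. \<forall>b\<in>A. in_arc v a \<and> in_arc v b \<longrightarrow> a = b)
     \<and> \<not> (\<exists>i1 j1 i2 j2. (i1,j1) \<in> A \<and> (i2,j2) \<in> A \<and> i1 < i2 \<and> i2 < j1 \<and> j1 < j2)"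

definition rna_2nc :: "nat \<Rightarrow> (nat \<times> nat) set \<Rightarrow> bool" where
  "rna_2nc n A \<longleftrightarrow> two_noncrossing n A \<and> (\<forall>i. (i, i+1) \<notin> A)"

definition isolated :: "nat \<Rightarrow> (nat \<times> nat) set \<Rightarrow> nat set" where
  "isolated n A = {v \<in> {1..n}. \<not> (\<exists>a\<in>A. in_arc v a)}"

definition S2 :: "nat \<Rightarrow> nat \<Rightarrow> nat" where
  "S2 n l = card {A. rna_2nc n A \<and> card (isolated n A) = l}"

end

theory Submission
  imports Defs
begin

lemma rna_iff:
  "rna_2nc n A \<longleftrightarrow>
     (\<forall>(i,j)\<in>A. 1 \<le> i \<and> Suc i < j \<and> j \<le> n) \<and>
     (\<forall>(i,j)\<in>A. \<forall>(i',j')\<in>A. (i = i' \<or> i = j' \<or> j = i' \<or> j = j') \<longrightarrow> i = i' \<and> j = j') \<and>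
     (\<forall>(i,j)\<in>A. \<forall>(i',j')\<in>A. \<not>(i < i' \<and> i' < j \<and> j < j'))" (is "?L = ?R")
proof
  assume L: ?L
  have d: "\<forall>(i,j)\<in>A. 1 \<le> i \<and> i < j \<and> j \<le> n" and u: "\<And>v a b. a \<in> A \<Longrightarrow> b \<in> A \<Longrightarrow> in_arc v a \<Longrightarrow> in_arc v b \<Longrightarrow> a = b"
    and c: "\<not> (\<exists>i1 j1 i2 j2. (i1,j1) \<in> A \<and> (i2,j2) \<in> A \<and> i1 < i2 \<and> i2 < j1 \<and> j1 < j2)"
    and s: "\<And>i. (i, i+1) \<notin> A"
    using L unfolding rna_2nc_def two_noncrossing_def digraph_on_def by blast+
  have 1: "\<forall>(i,j)\<in>A. 1 \<le> i \<and> Suc i < j \<and> j \<le> n"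
  proof (clarify)
    fix i j assume "(i,j) \<in> A"
    with d s[of i] show "1 \<le> i \<and> Suc i < j \<and> j \<le> n"
      by (metis (no_types, lifting) Suc_eq_plus1 Suc_lessI case_prodD)
  qed
  have 2: "\<forall>(i,j)\<in>A. \<forall>(i',j')\<in>A. (i = i' \<or> i = j' \<or> j = i' \<or> j = j') \<longrightarrow> i = i' \<and> j = j'"
  proof (clarify)
    fix i j i' j' assume a: "(i,j) \<in> A" "(i',j') \<in> A" "i = i' \<or> i = j' \<or> j = i' \<or> j = j'"
    then obtain v where "in_arc v (i,j)" "in_arc v (i',j')" unfolding in_arc_def by auto
    from u[OF a(1,2) this] show "i = i' \<and> j = j'" by simp
  qed
  show ?R using 1 2 c by blast
next
  assume R: ?R
  have d: "digraph_on n A" using R unfolding digraph_on_def by fastforce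
  have u: "\<forall>v. \<forall>a\<in>A. \<forall>b\<in>A. in_arc v a \<and> in_arc v b \<longrightarrow> a = b"
  proof (intro allI ballI impI)
    fix v a b assume "a \<in> A" "b \<in> A" "in_arc v a \<and> in_arc v b"
    then show "a = b" using R unfolding in_arc_def
      by (smt (verit, best) case_prodE prod.sel)
  qed
  have s: "\<forall>i. (i, i+1) \<notin> A" using R by fastforce
  show ?L unfolding rna_2nc_def two_noncrossing_def using d u s R by blast
qed

lemma arcD: "rna_2nc n A \<Longrightarrow> (i,j) \<in> A \<Longrightarrow> 1 \<le> i \<and> Suc i < j \<and> j \<le> n"
  unfolding rna_iff by blast
lemma uniqD: "rna_2nc n A \<Longrightarrow> (i,j) \<in> A \<Longrightarrow> (i',j') \<in> A \<Longrightarrow> i = i' \<or> i = j' \<or> j = i' \<or> j = j' \<Longrightarrow> i = i' \<and> j = j'"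
  unfolding rna_iff by blast
lemma ncD: "rna_2nc n A \<Longrightarrow> (i,j) \<in> A \<Longrightarrow> (i',j') \<in> A \<Longrightarrow> i < i' \<Longrightarrow> i' < j \<Longrightarrow> j < j' \<Longrightarrow> False"
  unfolding rna_iff by blast

lemma rna_mono: "rna_2nc m A \<Longrightarrow> m \<le> n \<Longrightarrow> rna_2nc n A"
  unfolding rna_iff by fastforce

lemma rna_shrink: "rna_2nc (Suc m) A \<Longrightarrow> \<forall>(i,j)\<in>A. j \<noteq> Suc m \<Longrightarrow> rna_2nc m A"
  unfolding rna_iff by (smt (verit, best) case_prodD case_prodI2 le_Suc_eq)

lemma isolated_alt: "isolated n A = {v \<in> {1..n}. \<forall>(i,j)\<in>A. v \<noteq> i \<and> v \<noteq> j}"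
  unfolding isolated_def in_arc_def by fastforce

definition pst :: "nat \<Rightarrow> (nat \<times> nat) set \<Rightarrow> nat set \<Rightarrow> bool" where
  "pst n A Q \<longleftrightarrow> rna_2nc n A \<and> Q \<subseteq> {1..n} \<and> (\<forall>v\<in>Q. \<forall>(i,j)\<in>A. v \<noteq> i \<and> v \<noteq> j \<and> \<not>(i < v \<and> v < j))"

definition dots :: "nat \<Rightarrow> (nat \<times> nat) set \<Rightarrow> nat set \<Rightarrow> nat set" where
  "dots n A Q = isolated n A - Q"

definition PS :: "nat \<Rightarrow> nat \<Rightarrow> nat \<Rightarrow> ((nat \<times> nat) set \<times> nat set) set" where
  "PS n k d = {(A,Q). pst n A Q \<and> card Q = k \<and> card (dots n A Q) = d}"

definition PE where "PE n k d = {x \<in> PS n k d. n \<in> snd x}"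
definition PN where "PN n k d = {x \<in> PS n k d. n \<notin> snd x}"

lemma finite_PS: "finite (PS n k d)"
proof (rule finite_subset)
  show "PS n k d \<subseteq> Pow ({1..n}\<times>{1..n}) \<times> Pow {1..n}"
    unfolding PS_def pst_def using arcD by fastforce
qed auto

lemma finite_PE: "finite (PE n k d)" unfolding PE_def using finite_PS by auto
lemma finite_PN: "finite (PN n k d)" unfolding PN_def using finite_PS by auto

lemma card_PS_split: "card (PS n k d) = card (PE n k d) + card (PN n k d)"
proof -
  have "PS n k d = PE n k d \<union> PN n k d" "PE n k d \<inter> PN n k d = {}" unfolding PE_def PN_def by auto
  then show ?thesis using finite_PE finite_PN card_Un_disjoint by metis
qed

lemma PE_zero: "PE n 0 d = {}"
proof -
  { fix A Q assume "(A,Q) \<in> PS n 0 d" "n \<in> Q"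
    then have "Q \<subseteq> {1..n}" "card Q = 0" unfolding PS_def pst_def by auto
    then have "Q = {}" using finite_subset by fastforce
    with \<open>n \<in> Q\<close> have False by simp }
  then show ?thesis unfolding PE_def by auto
qed

lemma PE_Suc: "card (PE (Suc m) (Suc k) d) = card (PS m k d)"
proof -
  let ?f = "\<lambda>(A::(nat\<times>nat) set,Q::nat set). (A, Q - {Suc m})"
  let ?g = "\<lambda>(A::(nat\<times>nat) set,Q::nat set). (A, insert (Suc m) Q)"
  have "bij_betw ?f (PE (Suc m) (Suc k) d) (PS m k d)"
  proof (rule bij_betw_byWitness[where f'="?g"])
    show "\<forall>a\<in>PE (Suc m) (Suc k) d. ?g (?f a) = a" unfolding PE_def by auto
    show "\<forall>a\<in>PS m k d. ?f (?g a) = a" unfolding PS_def pst_def by auto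
    show "?f ` PE (Suc m) (Suc k) d \<subseteq> PS m k d"
    proof clarify
      fix A Q assume a: "(A,Q) \<in> PE (Suc m) (Suc k) d"
      then have p: "pst (Suc m) A Q" and c: "card Q = Suc k" "card (dots (Suc m) A Q) = d" and n: "Suc m \<in> Q"
        unfolding PE_def PS_def by auto
      have r: "rna_2nc (Suc m) A" and Q: "Q \<subseteq> {1..Suc m}" and ov: "\<forall>v\<in>Q. \<forall>(i,j)\<in>A. v \<noteq> i \<and> v \<noteq> j \<and> \<not>(i < v \<and> v < j)"
        using p unfolding pst_def by auto
      have nA: "\<forall>(i,j)\<in>A. j \<noteq> Suc m" using ov n by blast
      have r': "rna_2nc m A" using rna_shrink[OF r nA] .
      have fO: "finite Q" using Q finite_subset by blast
      have "dots m A (Q - {Suc m}) = dots (Suc m) A Q"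
        unfolding dots_def isolated_alt using n le_Suc_eq by auto
      moreover have "card (Q - {Suc m}) = k" using c fO n by simp
      moreover have "pst m A (Q - {Suc m})" unfolding pst_def using r' Q ov by auto
      ultimately show "(A, Q - {Suc m}) \<in> PS m k d" unfolding PS_def using c by auto
    qed
    show "?g ` PS m k d \<subseteq> PE (Suc m) (Suc k) d"
    proof clarify
      fix A Q assume a: "(A,Q) \<in> PS m k d"
      then have p: "pst m A Q" and c: "card Q = k" "card (dots m A Q) = d"
        unfolding PS_def by auto
      have r: "rna_2nc m A" and Q: "Q \<subseteq> {1..m}" and ov: "\<forall>v\<in>Q. \<forall>(i,j)\<in>A. v \<noteq> i \<and> v \<noteq> j \<and> \<not>(i < v \<and> v < j)"
        using p unfolding pst_def by auto
      have jm: "\<forall>(i,j)\<in>A. j \<le> m" using arcD[OF r] by blast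
      have fO: "finite Q" using Q finite_subset by blast
      have r2: "rna_2nc (Suc m) A" using rna_mono[OF r] by simp
      have Q2: "insert (Suc m) Q \<subseteq> {1..Suc m}" using Q by auto
      have ov2: "\<forall>v\<in>insert (Suc m) Q. \<forall>(i,j)\<in>A. v \<noteq> i \<and> v \<noteq> j \<and> \<not>(i < v \<and> v < j)"
      proof (intro ballI, clarify)
        fix v i j assume v: "v \<in> insert (Suc m) Q" and ij: "(i,j) \<in> A"
        have "i < j" "j \<le> m" using arcD[OF r ij] by auto
        then show "v \<noteq> i \<and> v \<noteq> j \<and> \<not>(i < v \<and> v < j)" using v ov ij by auto
      qed
      have "pst (Suc m) A (insert (Suc m) Q)" unfolding pst_def using r2 Q2 ov2 by blast
      moreover have "Suc m \<notin> Q" using Q by auto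
      then have "card (insert (Suc m) Q) = Suc k" using c fO by simp
      moreover have "dots (Suc m) A (insert (Suc m) Q) = dots m A Q"
        unfolding dots_def isolated_alt by auto
      ultimately show "(A, insert (Suc m) Q) \<in> PE (Suc m) (Suc k) d" unfolding PE_def PS_def using c by auto
    qed
  qed
  then show ?thesis by (rule bij_betw_same_card)
qed

lemma PN_split: "card (PN (Suc m) k d) = card {x\<in>PN (Suc m) k d. \<forall>(i,j)\<in>fst x. j \<noteq> Suc m}
     + card {x\<in>PN (Suc m) k d. \<exists>i. (i, Suc m) \<in> fst x}"
proof -
  have e: "PN (Suc m) k d = {x\<in>PN (Suc m) k d. \<forall>(i,j)\<in>fst x. j \<noteq> Suc m} \<union> {x\<in>PN (Suc m) k d. \<exists>i. (i, Suc m) \<in> fst x}"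
    by auto
  show ?thesis
    by (subst e, rule card_Un_disjoint) (use finite_PN in auto)
qed

lemma PN_X: "card {x\<in>PN (Suc m) k d. \<forall>(i,j)\<in>fst x. j \<noteq> Suc m} = (if d = 0 then 0 else card (PS m k (d - 1)))"
proof -
  have key: "(A,Q) \<in> PN (Suc m) k d \<and> (\<forall>(i,j)\<in>A. j \<noteq> Suc m) \<longleftrightarrow> d \<noteq> 0 \<and> (A,Q) \<in> PS m k (d - 1)" for A Q
  proof
    assume a: "(A,Q) \<in> PN (Suc m) k d \<and> (\<forall>(i,j)\<in>A. j \<noteq> Suc m)"
    then have p: "pst (Suc m) A Q" and c: "card Q = k" "card (dots (Suc m) A Q) = d" and n: "Suc m \<notin> Q"
      and nA: "\<forall>(i,j)\<in>A. j \<noteq> Suc m"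
      unfolding PN_def PS_def by auto
    have r: "rna_2nc (Suc m) A" and Q: "Q \<subseteq> {1..Suc m}" and ov: "\<forall>v\<in>Q. \<forall>(i,j)\<in>A. v \<noteq> i \<and> v \<noteq> j \<and> \<not>(i < v \<and> v < j)"
      using p unfolding pst_def by auto
    have r': "rna_2nc m A" using rna_shrink[OF r nA] .
    have Q': "Q \<subseteq> {1..m}" using Q n le_Suc_eq by auto
    have iA: "\<forall>(i,j)\<in>A. i \<noteq> Suc m" using arcD[OF r] by fastforce
    have de: "dots (Suc m) A Q = insert (Suc m) (dots m A Q)"
      unfolding dots_def isolated_alt using n nA iA le_Suc_eq by auto
    have fd: "finite (dots m A Q)" unfolding dots_def isolated_def by auto
    have "Suc m \<notin> dots m A Q" unfolding dots_def isolated_def by auto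
    then have "d = Suc (card (dots m A Q))" using c de fd by simp
    then show "d \<noteq> 0 \<and> (A,Q) \<in> PS m k (d - 1)" unfolding PS_def pst_def using r' Q' ov c by auto
  next
    assume a: "d \<noteq> 0 \<and> (A,Q) \<in> PS m k (d - 1)"
    then have p: "pst m A Q" and c: "card Q = k" "card (dots m A Q) = d - 1" and d0: "d \<noteq> 0"
      unfolding PS_def by auto
    have r: "rna_2nc m A" and Q: "Q \<subseteq> {1..m}" and ov: "\<forall>v\<in>Q. \<forall>(i,j)\<in>A. v \<noteq> i \<and> v \<noteq> j \<and> \<not>(i < v \<and> v < j)"
      using p unfolding pst_def by auto
    have jm: "\<forall>(i,j)\<in>A. j \<le> m" using arcD[OF r] by blast
    have iA: "\<forall>(i,j)\<in>A. i \<le> m" using arcD[OF r] by fastforce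
    have n: "Suc m \<notin> Q" using Q by auto
    have de: "dots (Suc m) A Q = insert (Suc m) (dots m A Q)"
      unfolding dots_def isolated_alt using n jm iA le_Suc_eq by fastforce
    have fd: "finite (dots m A Q)" unfolding dots_def isolated_def by auto
    have "Suc m \<notin> dots m A Q" unfolding dots_def isolated_def by auto
    then have "card (dots (Suc m) A Q) = d" using c de fd d0 by simp
    moreover have "pst (Suc m) A Q" unfolding pst_def using rna_mono[OF r] Q ov by fastforce
    moreover have "\<forall>(i,j)\<in>A. j \<noteq> Suc m" using jm by fastforce
    ultimately show "(A,Q) \<in> PN (Suc m) k d \<and> (\<forall>(i,j)\<in>A. j \<noteq> Suc m)"
      unfolding PN_def PS_def using c n by auto
  qed
  show ?thesis
  proof (cases "d = 0")
    case True
    then have e: "{x\<in>PN (Suc m) k d. \<forall>(i,j)\<in>fst x. j \<noteq> Suc m} = {}" using key by fastforce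
    have "card {x\<in>PN (Suc m) k d. \<forall>(i,j)\<in>fst x. j \<noteq> Suc m} = 0" by (simp only: e card.empty)
    with True show ?thesis by simp
  next
    case False
    then have e: "{x\<in>PN (Suc m) k d. \<forall>(i,j)\<in>fst x. j \<noteq> Suc m} = PS m k (d - 1)" using key by fastforce
    show ?thesis using False by (simp only: e if_False)
  qed
qed

lemma rna_subset: "rna_2nc n A \<Longrightarrow> B \<subseteq> A \<Longrightarrow> rna_2nc n B"
  unfolding rna_iff by blast

lemma ballpair: "(\<And>i l. (i,l) \<in> X \<Longrightarrow> P i l) \<Longrightarrow> \<forall>(i,l)\<in>X. P i l"
  by auto

lemma rna_insertI:
  assumes r: "rna_2nc m A" and j: "1 \<le> j" "j < m"
    and oj: "\<And>i l. (i,l) \<in> A \<Longrightarrow> j \<noteq> i \<and> j \<noteq> l \<and> \<not>(i < j \<and> j < l)"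
  shows "rna_2nc (Suc m) (insert (j, Suc m) A)"
proof -
  let ?A = "insert (j, Suc m) A"
  have am: "1 \<le> i \<and> Suc i < l \<and> l \<le> m" if "(i,l) \<in> A" for i l using arcD[OF r that] .
  have d: "1 \<le> i \<and> Suc i < l \<and> l \<le> Suc m" if "(i,l) \<in> ?A" for i l
  proof (cases "(i,l) = (j, Suc m)")
    case True then show ?thesis using j by simp
  next
    case False then have "(i,l) \<in> A" using that by blast
    then have "1 \<le> i \<and> Suc i < l \<and> l \<le> m" by (rule am)
    then show ?thesis by simp
  qed
  have u: "i = i' \<and> l = l'" if a: "(i,l) \<in> ?A" "(i',l') \<in> ?A" "i = i' \<or> i = l' \<or> l = i' \<or> l = l'" for i l i' l'
  proof (cases "(i,l) = (j, Suc m)")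
    case T1: True
    show ?thesis
    proof (cases "(i',l') = (j, Suc m)")
      case True then show ?thesis using T1 by simp
    next
      case False
      then have b: "(i',l') \<in> A" using a by blast
      have "j \<noteq> i'" "j \<noteq> l'" "Suc m \<noteq> i'" "Suc m \<noteq> l'" using oj[OF b] am[OF b] by auto
      then show ?thesis using T1 a(3) by simp
    qed
  next
    case F1: False
    then have b: "(i,l) \<in> A" using a by blast
    show ?thesis
    proof (cases "(i',l') = (j, Suc m)")
      case True
      have "j \<noteq> i" "j \<noteq> l" "Suc m \<noteq> i" "Suc m \<noteq> l" using oj[OF b] am[OF b] by auto
      then show ?thesis using True a(3) by simp
    next
      case False
      then have "(i',l') \<in> A" using a by blast
      then show ?thesis using uniqD[OF r b] a(3) by blast
    qed
  qed
  have c: "False" if a: "(i,l) \<in> ?A" "(i',l') \<in> ?A" "i < i'" "i' < l" "l < l'" for i l i' l'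
  proof (cases "(i,l) = (j, Suc m)")
    case T1: True
    show ?thesis
    proof (cases "(i',l') = (j, Suc m)")
      case True then show ?thesis using T1 a by simp
    next
      case False
      then have b: "(i',l') \<in> A" using a by blast
      then show ?thesis using am[OF b] T1 a by simp
    qed
  next
    case F1: False
    then have b: "(i,l) \<in> A" using a by blast
    show ?thesis
    proof (cases "(i',l') = (j, Suc m)")
      case True
      then show ?thesis using oj[OF b] a by simp
    next
      case False
      then have "(i',l') \<in> A" using a by blast
      then show ?thesis using ncD[OF r b] a by blast
    qed
  qed
  show ?thesis unfolding rna_iff
  proof (intro conjI)
    show "\<forall>(i,l)\<in>?A. 1 \<le> i \<and> Suc i < l \<and> l \<le> Suc m"
      by (rule ballpair) (rule d)
    show "\<forall>(i,l)\<in>?A. \<forall>(i',l')\<in>?A. (i = i' \<or> i = l' \<or> l = i' \<or> l = l') \<longrightarrow> i = i' \<and> l = l'"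
      by (intro ballpair impI) (rule u)
    show "\<forall>(i,l)\<in>?A. \<forall>(i',l')\<in>?A. \<not>(i < i' \<and> i' < l \<and> l < l')"
      by (intro ballpair notI, elim conjE) (rule c)
  qed
qed

lemma PN_Y: "card {x\<in>PN (Suc m) k d. \<exists>i. (i, Suc m) \<in> fst x} = card (PN m (Suc k) d)"
proof -
  let ?Y = "{x\<in>PN (Suc m) k d. \<exists>i. (i, Suc m) \<in> fst x}"
  let ?f = "\<lambda>(A::(nat\<times>nat) set,Q::nat set). ({a\<in>A. snd a \<noteq> Suc m}, Q \<union> {i. (i,Suc m)\<in>A})"
  let ?g = "\<lambda>(A::(nat\<times>nat) set,Q::nat set). (insert (Max Q, Suc m) A, Q - {Max Q})"
  have fwd: "?f (A,Q) \<in> PN m (Suc k) d \<and> ?g (?f (A,Q)) = (A,Q)" if a: "(A,Q) \<in> ?Y" for A Q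
  proof -
    from a obtain j where jA: "(j, Suc m) \<in> A" by (auto simp only: mem_Collect_eq fst_conv)
    from a have p: "pst (Suc m) A Q" and c: "card Q = k" "card (dots (Suc m) A Q) = d" and n: "Suc m \<notin> Q"
      unfolding PN_def PS_def by auto
    have r: "rna_2nc (Suc m) A" and Q: "Q \<subseteq> {1..Suc m}" and ov: "\<forall>v\<in>Q. \<forall>(i,j)\<in>A. v \<noteq> i \<and> v \<noteq> j \<and> \<not>(i < v \<and> v < j)"
      using p unfolding pst_def by auto
    have j1: "1 \<le> j" "j < m" using arcD[OF r jA] by auto
    have jU: "i = j" if "(i, Suc m) \<in> A" for i using uniqD[OF r that jA] by simp
    have J: "{i. (i,Suc m)\<in>A} = {j}"
    proof
      show "{i. (i,Suc m)\<in>A} \<subseteq> {j}" using jU by blast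
      show "{j} \<subseteq> {i. (i,Suc m)\<in>A}" using jA by blast
    qed
    have A': "{a\<in>A. snd a \<noteq> Suc m} = A - {(j, Suc m)}"
    proof
      show "{a\<in>A. snd a \<noteq> Suc m} \<subseteq> A - {(j, Suc m)}" by auto
      show "A - {(j, Suc m)} \<subseteq> {a\<in>A. snd a \<noteq> Suc m}"
      proof
        fix a assume a: "a \<in> A - {(j, Suc m)}"
        have "snd a \<noteq> Suc m"
        proof
          assume "snd a = Suc m"
          then have "(fst a, Suc m) \<in> A" using a by (metis DiffD1 prod.collapse)
          then have "fst a = j" by (rule jU)
          then have "a = (j, Suc m)" using \<open>snd a = Suc m\<close> by (metis prod.collapse)
          then show False using a by simp
        qed
        then show "a \<in> {a\<in>A. snd a \<noteq> Suc m}" using a by simp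
      qed
    qed
    let ?A' = "A - {(j, Suc m)}"
    have r1: "rna_2nc (Suc m) ?A'" using rna_subset[OF r] by blast
    have nS: "\<forall>(i,l)\<in>?A'. l \<noteq> Suc m"
    proof
      fix a assume "a \<in> ?A'"
      then have "a \<in> {a\<in>A. snd a \<noteq> Suc m}" unfolding A' .
      then have "snd a \<noteq> Suc m" by simp
      then show "case a of (i,l) \<Rightarrow> l \<noteq> Suc m" by (cases a) simp
    qed
    have r': "rna_2nc m ?A'" using rna_shrink[OF r1 nS] .
    have vlt: "v < j" if "v \<in> Q" for v
    proof -
      have "v \<le> Suc m" "v \<noteq> Suc m" "v \<noteq> j" "\<not> (j < v \<and> v < Suc m)" using that Q n ov jA by auto
      then show ?thesis by linarith
    qed
    have jQ: "j \<notin> Q" using vlt by blast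
    have fQ: "finite Q" using Q finite_subset by blast
    have Q': "insert j Q \<subseteq> {1..m}" using Q j1 vlt by fastforce
    have ov': "\<forall>v\<in>insert j Q. \<forall>(i,l)\<in>?A'. v \<noteq> i \<and> v \<noteq> l \<and> \<not>(i < v \<and> v < l)"
    proof (intro ballI)
      fix v a assume v: "v \<in> insert j Q" and aA: "a \<in> ?A'"
      obtain i l where a: "a = (i,l)" by (cases a)
      have il: "(i,l) \<in> A" "(i,l) \<noteq> (j, Suc m)" using aA a by auto
      have "v \<noteq> i \<and> v \<noteq> l \<and> \<not>(i < v \<and> v < l)"
      proof (cases "v = j")
        case True
        have l1: "l \<le> Suc m" using arcD[OF r il(1)] by simp
        have l2: "l \<noteq> Suc m"
        proof
          assume "l = Suc m"
          then have "i = j" using jU il(1) by simp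
          then show False using il(2) \<open>l = Suc m\<close> by simp
        qed
        have ji: "j \<noteq> i" "j \<noteq> l"
        proof -
          show "j \<noteq> i"
          proof
            assume "j = i"
            then have "i = j \<and> l = Suc m" using uniqD[OF r il(1) jA] by simp
            then show False using il(2) by simp
          qed
          show "j \<noteq> l"
          proof
            assume "j = l"
            then have "i = j \<and> l = Suc m" using uniqD[OF r il(1) jA] by simp
            then show False using il(2) by simp
          qed
        qed
        have "\<not>(i < j \<and> j < l)"
        proof
          assume "i < j \<and> j < l"
          moreover have "l < Suc m" using l1 l2 by simp
          ultimately show False using ncD[OF r il(1) jA] by blast
        qed
        then show ?thesis using True ji by simp
      next
        case False
        then have "v \<in> Q" using v by simp
        then show ?thesis using ov il(1) by blast
      qed
      then show "case a of (i,l) \<Rightarrow> v \<noteq> i \<and> v \<noteq> l \<and> \<not>(i < v \<and> v < l)" using a by simp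
    qed
    have mQ: "m \<notin> insert j Q" using vlt j1 by fastforce
    have cQ: "card (insert j Q) = Suc k" using c fQ jQ by simp
    have dd: "dots m ?A' (insert j Q) = dots (Suc m) A Q"
    proof -
      have "v \<in> dots m ?A' (insert j Q) \<longleftrightarrow> v \<in> dots (Suc m) A Q" for v
      proof
        assume "v \<in> dots m ?A' (insert j Q)"
        then have v: "1 \<le> v" "v \<le> m" "\<forall>(i,l)\<in>?A'. v \<noteq> i \<and> v \<noteq> l" "v \<notin> Q" "v \<noteq> j"
          unfolding dots_def isolated_alt by auto
        then show "v \<in> dots (Suc m) A Q" unfolding dots_def isolated_alt by fastforce
      next
        assume "v \<in> dots (Suc m) A Q"
        then have v: "1 \<le> v" "v \<le> Suc m" "\<forall>(i,l)\<in>A. v \<noteq> i \<and> v \<noteq> l" "v \<notin> Q"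
          unfolding dots_def isolated_alt by auto
        have "v \<noteq> j" "v \<noteq> Suc m" using v(3) jA by auto
        then show "v \<in> dots m ?A' (insert j Q)" unfolding dots_def isolated_alt using v by auto
      qed
      then show ?thesis by blast
    qed
    have pst': "pst m ?A' (insert j Q)" unfolding pst_def using r' Q' ov' by blast
    have mem: "?f (A,Q) \<in> PN m (Suc k) d"
      unfolding PN_def PS_def using A' J pst' mQ cQ dd c by simp
    have mx: "Max (insert j Q) = j" using vlt fQ by (simp add: Max_insert2 less_imp_le)
    have "?g (?f (A,Q)) = (A,Q)" using A' J mx jA jQ by auto
    with mem show ?thesis by blast
  qed
  have bwd: "?g (A,Q) \<in> ?Y \<and> ?f (?g (A,Q)) = (A,Q)" if a: "(A,Q) \<in> PN m (Suc k) d" for A Q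
  proof -
    from a have p: "pst m A Q" and c: "card Q = Suc k" "card (dots m A Q) = d" and n: "m \<notin> Q"
      unfolding PN_def PS_def by auto
    have r: "rna_2nc m A" and Q: "Q \<subseteq> {1..m}" and ov: "\<forall>v\<in>Q. \<forall>(i,j)\<in>A. v \<noteq> i \<and> v \<noteq> j \<and> \<not>(i < v \<and> v < j)"
      using p unfolding pst_def by auto
    have fQ: "finite Q" using Q finite_subset by blast
    have ne: "Q \<noteq> {}" using c by auto
    define j where "j = Max Q"
    have jQ: "j \<in> Q" unfolding j_def using fQ ne by simp
    have vle: "v \<le> j" if "v \<in> Q" for v unfolding j_def using fQ that by simp
    have jm1: "j \<in> {1..m}" using jQ Q by blast
    have jm2: "j \<noteq> m" using jQ n by blast
    have j1: "1 \<le> j" "j < m" using jm1 jm2 by auto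
    have am: "\<forall>(i,l)\<in>A. 1 \<le> i \<and> Suc i < l \<and> l \<le> m" using arcD[OF r] by blast
    let ?A = "insert (j, Suc m) A"
    have oldj: "j \<noteq> i \<and> j \<noteq> l \<and> \<not>(i < j \<and> j < l)" if "(i,l) \<in> A" for i l
      using ov jQ that by blast
    have amm: "1 \<le> i \<and> Suc i < l \<and> l \<le> m" if "(i,l) \<in> A" for i l using am that by blast
    have rA: "rna_2nc (Suc m) ?A" by (rule rna_insertI[OF r j1 oldj])
    have Q2: "Q - {j} \<subseteq> {1..Suc m}" using Q by auto
    have ov2: "\<forall>v\<in>Q - {j}. \<forall>(i,l)\<in>?A. v \<noteq> i \<and> v \<noteq> l \<and> \<not>(i < v \<and> v < l)"
      using ov vle Q by fastforce
    have c2: "card (Q - {j}) = k" using c jQ fQ by simp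
    have dd: "dots (Suc m) ?A (Q - {j}) = dots m A Q"
    proof -
      have "v \<in> dots (Suc m) ?A (Q - {j}) \<longleftrightarrow> v \<in> dots m A Q" for v
      proof
        assume "v \<in> dots (Suc m) ?A (Q - {j})"
        then have v: "1 \<le> v" "v \<le> Suc m" "\<forall>(i,l)\<in>A. v \<noteq> i \<and> v \<noteq> l" "v \<notin> Q" "v \<noteq> j" "v \<noteq> Suc m"
          unfolding dots_def isolated_alt by auto
        then show "v \<in> dots m A Q" unfolding dots_def isolated_alt by auto
      next
        assume "v \<in> dots m A Q"
        then have v: "1 \<le> v" "v \<le> m" "\<forall>(i,l)\<in>A. v \<noteq> i \<and> v \<noteq> l" "v \<notin> Q"
          unfolding dots_def isolated_alt by auto
        have "v \<noteq> j" using v(4) jQ by auto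
        then show "v \<in> dots (Suc m) ?A (Q - {j})" unfolding dots_def isolated_alt using v by auto
      qed
      then show ?thesis by blast
    qed
    have mem: "?g (A,Q) \<in> ?Y"
      unfolding PN_def PS_def pst_def using rA Q2 ov2 c2 dd c j_def[symmetric] by auto
    have e1: "{a\<in>?A. snd a \<noteq> Suc m} = A" using am by auto
    have e2: "{i. (i,Suc m)\<in>?A} = {j}" using am by auto
    have "?f (?g (A,Q)) = (A,Q)" using e1 e2 jQ j_def by auto
    with mem show ?thesis by blast
  qed
  have "bij_betw ?f ?Y (PN m (Suc k) d)"
  proof (rule bij_betw_byWitness[where f'="?g"])
    show "\<forall>a\<in>?Y. ?g (?f a) = a"
    proof
      fix x assume h: "x \<in> ?Y"
      obtain A Q where x: "x = (A,Q)" by (cases x)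
      show "?g (?f x) = x" using fwd[of A Q] h unfolding x by blast
    qed
    show "\<forall>a\<in>PN m (Suc k) d. ?f (?g a) = a"
    proof
      fix x assume h: "x \<in> PN m (Suc k) d"
      obtain A Q where x: "x = (A,Q)" by (cases x)
      show "?f (?g x) = x" using bwd[of A Q] h unfolding x by blast
    qed
    show "?f ` ?Y \<subseteq> PN m (Suc k) d"
    proof
      fix y assume "y \<in> ?f ` ?Y"
      then obtain x where h: "x \<in> ?Y" and y: "y = ?f x" by blast
      obtain A Q where x: "x = (A,Q)" by (cases x)
      show "y \<in> PN m (Suc k) d" using fwd[of A Q] h unfolding y x by blast
    qed
    show "?g ` PN m (Suc k) d \<subseteq> ?Y"
    proof
      fix y assume "y \<in> ?g ` PN m (Suc k) d"
      then obtain x where h: "x \<in> PN m (Suc k) d" and y: "y = ?g x" by blast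
      obtain A Q where x: "x = (A,Q)" by (cases x)
      show "y \<in> ?Y" using bwd[of A Q] h unfolding y x by blast
    qed
  qed
  then show ?thesis by (rule bij_betw_same_card)
qed



definition Cm :: "nat \<Rightarrow> nat \<Rightarrow> nat" where
  "Cm x e = (if e = 0 then 0 else x choose (e - 1))"

lemma pascal: "Suc x choose e = Cm x e + (x choose e)"
  unfolding Cm_def by (cases e) auto

lemma Cm_Suc: "Cm x (Suc e) = x choose e" unfolding Cm_def by simp

definition Bf :: "nat \<Rightarrow> nat \<Rightarrow> nat \<Rightarrow> int" where
  "Bf p q d = (if p < q then 0 else case d of 0 \<Rightarrow> (if p = 0 then 1 else 0)
     | Suc e \<Rightarrow> int (p+e choose e) * int (q+e choose e) - int (Cm (p+e) e) * int (q+e choose Suc e))"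

definition Tf :: "nat \<Rightarrow> nat \<Rightarrow> nat \<Rightarrow> int" where
  "Tf p q d = (if p < q then 0 else case d of 0 \<Rightarrow> (if q = 0 then 1 else 0)
     | Suc e \<Rightarrow> int (p+e+1 choose Suc e) * int (q+e choose e) - int (p+e+1 choose e) * int (q+e choose Suc e))"

lemma Tf_Suc: "q \<le> p \<Longrightarrow> Tf p q (Suc e) = int (Suc (p+e) choose Suc e) * int (q+e choose e) - int (Suc (p+e) choose e) * int (q+e choose Suc e)"
  by (simp add: Tf_def)
lemma Bf_Suc: "q \<le> p \<Longrightarrow> Bf p q (Suc e) = int (p+e choose e) * int (q+e choose e) - int (Cm (p+e) e) * int (q+e choose Suc e)"
  by (simp add: Bf_def)
lemma Tf_0: "q \<le> p \<Longrightarrow> Tf p q 0 = (if q = 0 then 1 else 0)" by (simp add: Tf_def)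
lemma Bf_0: "q \<le> p \<Longrightarrow> Bf p q 0 = (if p = 0 then 1 else 0)" by (simp add: Bf_def)

lemma I1: "q \<le> p \<Longrightarrow> Tf (Suc p) q d = Tf p q d + Bf (Suc p) q d"
proof (cases d)
  case 0
  then show ?thesis unfolding Tf_def Bf_def by auto
next
  case (Suc e)
  assume qp: "q \<le> p"
  have "Tf (Suc p) q d = int (Suc (Suc p+e) choose Suc e) * int (q+e choose e) - int (Suc (Suc p+e) choose e) * int (q+e choose Suc e)"
    using Tf_Suc[of q "Suc p" e] qp Suc by simp
  also have "\<dots> = int ((Suc p+e choose e) + (Suc p+e choose Suc e)) * int (q+e choose e) - int (Cm (Suc p+e) e + (Suc p+e choose e)) * int (q+e choose Suc e)"
    by (simp only: pascal Cm_Suc add.commute)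
  finally show ?thesis using Suc qp Tf_Suc[of q p e] Bf_Suc[of q "Suc p" e]
    by (simp add: algebra_simps)
qed

lemma I2: "Tf q q d = Bf q q d"
proof (cases d)
  case 0
  then show ?thesis unfolding Tf_def Bf_def by auto
next
  case (Suc e)
  have "Tf q q d = int (Suc (q+e) choose Suc e) * int (q+e choose e) - int (Suc (q+e) choose e) * int (q+e choose Suc e)"
    using Tf_Suc[of q q e] Suc by simp
  also have "\<dots> = int ((q+e choose e) + (q+e choose Suc e)) * int (q+e choose e) - int (Cm (q+e) e + (q+e choose e)) * int (q+e choose Suc e)"
    by (simp only: pascal Cm_Suc add.commute)
  finally show ?thesis using Suc Bf_Suc[of q q e]
    by (simp add: algebra_simps)
qed

lemma I3: "q < p \<Longrightarrow> Bf p (Suc q) (Suc e) = Tf p (Suc q) e + Bf p q (Suc e)"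
proof -
  assume qp: "q < p"
  have "Bf p (Suc q) (Suc e) = int (p+e choose e) * int (Suc (q+e) choose e) - int (Cm (p+e) e) * int (Suc (q+e) choose Suc e)"
    using Bf_Suc[of "Suc q" p e] qp by simp
  also have "\<dots> = int (p+e choose e) * int (Cm (q+e) e + (q+e choose e)) - int (Cm (p+e) e) * int ((q+e choose e) + (q+e choose Suc e))"
    by (simp only: pascal Cm_Suc add.commute)
  finally have 1: "Bf p (Suc q) (Suc e) = \<dots>" .
  show ?thesis
  proof (cases e)
    case 0
    then show ?thesis using 1 qp Bf_Suc[of q p e] Tf_0[of "Suc q" p] by (simp add: Cm_def)
  next
    case (Suc f)
    then have t: "Tf p (Suc q) e = int (Suc (p+f) choose Suc f) * int (Suc q+f choose f) - int (Suc (p+f) choose f) * int (Suc q+f choose Suc f)"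
      using Tf_Suc[of "Suc q" p f] qp by simp
    show ?thesis using 1 t qp Bf_Suc[of q p e] Suc by (simp add: Cm_def algebra_simps)
  qed
qed

lemma I4: "Bf p 0 (Suc e) = Tf p 0 e"
proof (cases e)
  case 0
  then show ?thesis by (simp add: Bf_def Tf_def Cm_def)
next
  case (Suc f)
  then show ?thesis by (simp add: Bf_def Tf_def Cm_def)
qed

definition FT :: "nat \<Rightarrow> nat \<Rightarrow> nat \<Rightarrow> int" where
  "FT n k d = (if k + d \<le> n \<and> even (n - k - d) then Tf ((n - k - d) div 2 + k) ((n - k - d) div 2) d else 0)"
definition FN :: "nat \<Rightarrow> nat \<Rightarrow> nat \<Rightarrow> int" where
  "FN n k d = (if k + d \<le> n \<and> even (n - k - d) then Bf ((n - k - d) div 2 + k) ((n - k - d) div 2) d else 0)"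

lemma valid_iff: "(k + d \<le> (n::nat) \<and> even (n - k - d)) \<longleftrightarrow> (\<exists>a. n = 2*a + k + d)"
proof
  assume "k + d \<le> n \<and> even (n - k - d)"
  then have "even (n - k - d)" by blast
  then obtain a where "n - k - d = 2*a" by (rule evenE)
  then show "\<exists>a. n = 2*a + k + d" using \<open>k + d \<le> n \<and> even (n - k - d)\<close> by (intro exI[of _ a]) linarith
qed auto

lemma FT_val: "FT (2*a + k + d) k d = Tf (a + k) a d" unfolding FT_def by simp
lemma FN_val: "FN (2*a + k + d) k d = Bf (a + k) a d" unfolding FN_def by simp
lemma FT_inv: "\<not>(\<exists>a. n = 2*a + k + d) \<Longrightarrow> FT n k d = 0" unfolding FT_def using valid_iff by metis
lemma FN_inv: "\<not>(\<exists>a. n = 2*a + k + d) \<Longrightarrow> FN n k d = 0" unfolding FN_def using valid_iff by metis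

lemma FT_base: "FT 0 k d = (if k = 0 \<and> d = 0 then 1 else 0)"
  unfolding FT_def Tf_def by auto
lemma FN_base: "FN 0 k d = (if k = 0 \<and> d = 0 then 1 else 0)"
  unfolding FN_def Bf_def by auto

lemma R1: "FT (Suc m) k d = (if k = 0 then 0 else FT m (k - 1) d) + FN (Suc m) k d"
proof (cases "\<exists>a. Suc m = 2*a + k + d")
  case True
  then obtain a where a: "Suc m = 2*a + k + d" by blast
  have 1: "FT (Suc m) k d = Tf (a+k) a d" unfolding a by (rule FT_val)
  have 2: "FN (Suc m) k d = Bf (a+k) a d" unfolding a by (rule FN_val)
  show ?thesis
  proof (cases k)
    case 0
    have "Tf (a+k) a d = Bf (a+k) a d" unfolding 0 using I2[of a d] by simp
    then show ?thesis unfolding 1 2 using 0 by simp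
  next
    case (Suc k')
    then have "m = 2*a + k' + d" using a by simp
    then have 3: "FT m (k - 1) d = Tf (a+k') a d" using FT_val[of a k' d] Suc by simp
    have 4: "Tf (a+k) a d = Tf (a+k') a d + Bf (a+k) a d" using I1[of a "a + k'" d] Suc by simp
    show ?thesis unfolding 1 2 3 4 using Suc by simp
  qed
next
  case False
  have n1: "\<not> (\<exists>a. m = 2*a + (k - 1) + d)" if "k \<noteq> 0"
  proof
    assume "\<exists>a. m = 2*a + (k - 1) + d"
    then obtain a where "m = 2*a + (k - 1) + d" by blast
    then have "Suc m = 2*a + k + d" using that by simp
    then show False using False by blast
  qed
  show ?thesis
  proof (cases "k = 0")
    case True then show ?thesis using FT_inv[OF False] FN_inv[OF False] by simp
  next
    case f: False then show ?thesis using FT_inv[OF False] FN_inv[OF False] FT_inv[OF n1[OF f]] by simp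
  qed
qed

lemma R2: "FN (Suc m) k d = (if d = 0 then 0 else FT m k (d - 1)) + FN m (Suc k) d"
proof (cases "\<exists>a. Suc m = 2*a + k + d")
  case True
  then obtain a where a: "Suc m = 2*a + k + d" by blast
  have 2: "FN (Suc m) k d = Bf (a+k) a d" unfolding a by (rule FN_val)
  show ?thesis
  proof (cases d)
    case 0
    have "a + k > 0" using a 0 by linarith
    then have l: "Bf (a+k) a d = 0" using 0 Bf_0[of a "a+k"] by simp
    show ?thesis
    proof (cases a)
      case 0
      have "\<not>(\<exists>b. m = 2*b + Suc k + d)" using a 0 by auto
      then show ?thesis unfolding 2 l using FN_inv \<open>d = 0\<close> by simp
    next
      case (Suc a')
      then have "m = 2*a' + Suc k + d" using a by simp
      then have "FN m (Suc k) d = Bf (a' + Suc k) a' d" using FN_val[of a' "Suc k" d] by simp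
      moreover have "Bf (a' + Suc k) a' d = 0" using \<open>d = 0\<close> Bf_0[of a' "a' + Suc k"] by simp
      ultimately show ?thesis unfolding 2 l using \<open>d = 0\<close> by simp
    qed
  next
    case (Suc e)
    have "m = 2*a + k + e" using a Suc by simp
    then have t: "FT m k (d - 1) = Tf (a+k) a e" using FT_val[of a k e] Suc by simp
    show ?thesis
    proof (cases a)
      case 0
      have "\<not>(\<exists>b. m = 2*b + Suc k + d)" using a 0 by auto
      then have z: "FN m (Suc k) d = 0" by (rule FN_inv)
      have "Bf (a+k) a d = Tf (a+k) a e" using I4[of k e] 0 Suc by simp
      then show ?thesis unfolding 2 t z using Suc by simp
    next
      case (Suc a')
      then have "m = 2*a' + Suc k + d" using a by simp
      then have z: "FN m (Suc k) d = Bf (a + k) a' d" using FN_val[of a' "Suc k" d] Suc by simp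
      have "Bf (a+k) a d = Tf (a+k) a e + Bf (a + k) a' d" using I3[of a' "a + k" e] Suc \<open>d = Suc e\<close> by simp
      then show ?thesis unfolding 2 t z using \<open>d = Suc e\<close> by simp
    qed
  qed
next
  case False
  have n1: "\<not> (\<exists>a. m = 2*a + k + (d - 1))" if "d \<noteq> 0"
  proof
    assume "\<exists>a. m = 2*a + k + (d - 1)"
    then obtain a where "m = 2*a + k + (d - 1)" by blast
    then have "Suc m = 2*a + k + d" using that by simp
    then show False using False by blast
  qed
  have n2: "\<not> (\<exists>a. m = 2*a + Suc k + d)"
  proof
    assume "\<exists>a. m = 2*a + Suc k + d"
    then obtain a where "m = 2*a + Suc k + d" by blast
    then have "Suc m = 2*(Suc a) + k + d" by simp
    then show False using False by blast
  qed
  show ?thesis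
  proof (cases "d = 0")
    case True then show ?thesis using FN_inv[OF False] FN_inv[OF n2] by simp
  next
    case f: False then show ?thesis using FN_inv[OF False] FN_inv[OF n2] FT_inv[OF n1[OF f]] by simp
  qed
qed

lemma absn: "Suc k * (n choose Suc k) = (n - k) * (n choose k)"
  using binomial_absorption[of k n] binomial_absorb_comp[of n k] by simp

lemma K: "int (a+1) * Bf a a (Suc e) = int (Suc (a+e) choose a) * int (a+e choose a)"
proof -
  define x where "x = a + e choose e"
  have F1: "(e+1) * (a+e choose Suc e) = a * x" using absn[of e "a+e"] unfolding x_def by simp
  have F2: "e * x = (a+1) * Cm (a+e) e"
  proof (cases e)
    case 0 then show ?thesis by (simp add: Cm_def)
  next
    case (Suc f)
    then show ?thesis using absn[of f "a+e"] unfolding x_def Cm_def by (simp add: algebra_simps)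
  qed
  have F3: "(e+1) * (Suc (a+e) choose a) = (a+e+1) * x"
  proof -
    have "Suc (a+e) choose a = Suc (a+e) choose Suc e" using binomial_symmetric[of a "Suc (a+e)"] by simp
    then show ?thesis using Suc_times_binomial[of e "a+e"] unfolding x_def by simp
  qed
  have xs: "a + e choose a = x" unfolding x_def using binomial_symmetric[of a "a+e"] by simp
  have B: "Bf a a (Suc e) = int x * int x - int (Cm (a+e) e) * int (a+e choose Suc e)"
    using Bf_Suc[of a a e] unfolding x_def by simp
  have F1': "int (e+1) * int (a+e choose Suc e) = int a * int x" using F1 by (metis of_nat_mult)
  have F2': "int e * int x = int (a+1) * int (Cm (a+e) e)" using F2 by (metis of_nat_mult)
  have F3': "int (e+1) * int (Suc (a+e) choose a) = int (a+e+1) * int x" using F3 by (metis of_nat_mult)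
  have "int (e+1) * (int (a+1) * Bf a a (Suc e)) = int (e+1) * (int (Suc (a+e) choose a) * int (a+e choose a))"
  proof -
    have "int (e+1) * (int (a+1) * Bf a a (Suc e)) =
        int (e+1) * int (a+1) * int x * int x - (int (a+1) * int (Cm (a+e) e)) * (int (e+1) * int (a+e choose Suc e))"
      unfolding B by (simp add: algebra_simps)
    also have "\<dots> = int (e+1) * int (a+1) * int x * int x - (int e * int x) * (int a * int x)"
      unfolding F1' F2'[symmetric] ..
    also have "\<dots> = int (a+e+1) * int x * int x" by (simp add: algebra_simps)
    also have "\<dots> = int (e+1) * (int (Suc (a+e) choose a) * int (a+e choose a))"
      using F3' xs by (simp add: algebra_simps)
    finally show ?thesis .
  qed
  then show ?thesis by simp
qed

lemma K1: "1 \<le> a \<Longrightarrow> int a * Bf a a l = int (a+l choose (a+1)) * int (a+l-1 choose (a-1))"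
proof (cases l)
  case 0
  assume "1 \<le> a"
  then show ?thesis using 0 Bf_0[of a a] by simp
next
  case (Suc e)
  assume a1: "1 \<le> a"
  then obtain a' where a': "a = Suc a'" by (cases a) auto
  have "(a+1) * (a+l choose (a+1)) = (e+1) * (Suc (a+e) choose a)"
    using absn[of a "a+l"] Suc by simp
  then have G1: "int (a+1) * int (a+l choose (a+1)) = int (e+1) * int (Suc (a+e) choose a)"
    by (metis of_nat_mult)
  have "a * (a+e choose a) = (e+1) * (a+e choose (a-1))"
    using absn[of a' "a+e"] a' by simp
  then have G2: "int a * int (a+e choose a) = int (e+1) * int (a+e choose (a-1))"
    by (metis of_nat_mult)
  have "int (a+1) * (int a * Bf a a l) = int (a+1) * (int (a+l choose (a+1)) * int (a+l-1 choose (a-1)))"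
  proof -
    have "int (a+1) * (int a * Bf a a l) = int a * (int (Suc (a+e) choose a) * int (a+e choose a))"
      using K[of a e] Suc by (simp add: algebra_simps)
    also have "\<dots> = int (Suc (a+e) choose a) * (int a * int (a+e choose a))"
      by (simp only: mult_ac)
    also have "\<dots> = int (Suc (a+e) choose a) * (int (e+1) * int (a+e choose (a-1)))"
      unfolding G2 ..
    also have "\<dots> = (int (e+1) * int (Suc (a+e) choose a)) * int (a+e choose (a-1))"
      by (simp add: algebra_simps)
    also have "\<dots> = int (a+1) * (int (a+l choose (a+1)) * int (a+l-1 choose (a-1)))"
      unfolding G1[symmetric] using Suc by simp
    finally show ?thesis .
  qed
  then show ?thesis by simp
qed

lemma K2: "int (Suc a) * int (Suc a + 1) * Bf (Suc a) (Suc a) l = int (Suc a + l) * int (a + l) * Bf a a l"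
proof (cases l)
  case 0
  then show ?thesis using Bf_0[of a a] Bf_0[of "Suc a" "Suc a"] by simp
next
  case (Suc e)
  have "Suc a * (Suc a + l choose Suc a) = (Suc a + l) * (a + l choose a)"
    using Suc_times_binomial[of a "a + l"] by simp
  then have H1: "int (Suc a) * int (Suc a + l choose Suc a) = int (Suc a + l) * int (a + l choose a)"
    by (metis of_nat_mult)
  have "Suc a * (Suc a + e choose Suc a) = (a + l) * (a + e choose a)"
    using Suc_times_binomial[of a "a + e"] Suc by simp
  then have H2: "int (Suc a) * int (Suc a + e choose Suc a) = int (a + l) * int (a + e choose a)"
    by (metis of_nat_mult)
  have KA: "int (Suc a + 1) * Bf (Suc a) (Suc a) l = int (Suc a + l choose Suc a) * int (Suc a + e choose Suc a)"
    using K[of "Suc a" e] Suc by simp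
  have KB: "int (a + 1) * Bf a a l = int (a + l choose a) * int (a + e choose a)"
    using K[of a e] Suc by simp
  have "int (Suc a) * (int (Suc a) * int (Suc a + 1) * Bf (Suc a) (Suc a) l) = int (Suc a) * (int (Suc a + l) * int (a + l) * Bf a a l)"
  proof -
    have "int (Suc a) * (int (Suc a) * int (Suc a + 1) * Bf (Suc a) (Suc a) l)
        = int (Suc a) * int (Suc a) * (int (Suc a + 1) * Bf (Suc a) (Suc a) l)"
      by (simp only: mult_ac)
    also have "\<dots> = (int (Suc a) * int (Suc a + l choose Suc a)) * (int (Suc a) * int (Suc a + e choose Suc a))"
      unfolding KA by (simp only: mult_ac)
    also have "\<dots> = int (Suc a + l) * int (a + l) * (int (a + l choose a) * int (a + e choose a))"
      unfolding H1 H2 by (simp add: algebra_simps)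
    also have "\<dots> = int (Suc a + l) * int (a + l) * (int (a + 1) * Bf a a l)"
      unfolding KB ..
    also have "\<dots> = int (Suc a) * (int (Suc a + l) * int (a + l) * Bf a a l)"
      by (simp add: algebra_simps)
    finally show ?thesis .
  qed
  then show ?thesis by simp
qed

lemma PS_base: "card (PS 0 k d) = (if k = 0 \<and> d = 0 then 1 else 0)"
proof -
  have e: "PS 0 k d = (if k = 0 \<and> d = 0 then {({},{})} else {})"
  proof -
    have "pst 0 A Q \<longleftrightarrow> A = {} \<and> Q = {}" for A Q
    proof
      assume "pst 0 A Q"
      then have "rna_2nc 0 A" "Q \<subseteq> {1..0}" unfolding pst_def by auto
      then show "A = {} \<and> Q = {}" using arcD by fastforce
    next
      assume "A = {} \<and> Q = {}"
      then show "pst 0 A Q" unfolding pst_def rna_iff by simp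
    qed
    moreover have "dots 0 {} {} = {}" unfolding dots_def isolated_def by simp
    ultimately show ?thesis unfolding PS_def by auto
  qed
  show ?thesis by (simp add: e)
qed

lemma PN_base: "card (PN 0 k d) = (if k = 0 \<and> d = 0 then 1 else 0)"
proof -
  have "PN 0 k d = PS 0 k d" unfolding PN_def PS_def pst_def by auto
  then show ?thesis using PS_base by simp
qed

lemma main: "int (card (PS n k d)) = FT n k d \<and> int (card (PN n k d)) = FN n k d"
proof (induction n arbitrary: k d)
  case 0
  then show ?case using PS_base PN_base FT_base FN_base by simp
next
  case (Suc m)
  have N: "int (card (PN (Suc m) k d)) = FN (Suc m) k d"
    using PN_split[of m k d] PN_X[of m k d] PN_Y[of m k d] R2[of m k d] Suc.IH by auto
  have E: "int (card (PE (Suc m) k d)) = (if k = 0 then 0 else FT m (k - 1) d)"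
  proof (cases k)
    case 0 then show ?thesis using PE_zero by simp
  next
    case (Suc k') then show ?thesis using PE_Suc[of m k' d] Suc.IH by simp
  qed
  show ?case using card_PS_split[of "Suc m" k d] N E R1[of m k d] by simp
qed

lemma S2_PN: "S2 n l = card (PN n 0 l)"
proof -
  have e: "PN n 0 l = (\<lambda>A. (A, {})) ` {A. rna_2nc n A \<and> card (isolated n A) = l}"
  proof
    show "PN n 0 l \<subseteq> (\<lambda>A. (A, {})) ` {A. rna_2nc n A \<and> card (isolated n A) = l}"
    proof clarify
      fix A Q assume a: "(A,Q) \<in> PN n 0 l"
      then have "Q \<subseteq> {1..n}" "card Q = 0" "pst n A Q" "card (dots n A Q) = l" unfolding PN_def PS_def pst_def by auto
      then have "Q = {}" using finite_subset by fastforce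
      with a show "(A,Q) \<in> (\<lambda>A. (A, {})) ` {A. rna_2nc n A \<and> card (isolated n A) = l}"
        unfolding PN_def PS_def pst_def dots_def by auto
    qed
    show "(\<lambda>A. (A, {})) ` {A. rna_2nc n A \<and> card (isolated n A) = l} \<subseteq> PN n 0 l"
      unfolding PN_def PS_def pst_def dots_def by auto
  qed
  have inj: "inj_on (\<lambda>A. (A, ({}::nat set))) X" for X by (auto simp: inj_on_def)
  show ?thesis unfolding S2_def e by (rule card_image[OF inj, symmetric])
qed

lemma S2_FN: "int (S2 n l) = FN n 0 l" using S2_PN main by simp

theorem corollary3p2:
  shows "(\<forall>n l. l < n \<and> even (n - l) \<longrightarrow>
            real (S2 n l) = 2 / real (n - l)
              * real (((n + l) div 2) choose ((n - l) div 2 + 1))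
              * real (((n + l) div 2 - 1) choose ((n - l) div 2 - 1)))
       \<and> (\<forall>n l. n \<ge> 2 \<longrightarrow>
            (int n - int l) * (int n - int l + 2) * int (S2 n l)
            - (int n + int l) * (int n + int l - 2) * int (S2 (n - 2) l) = 0)"
proof (intro conjI allI impI)
  fix n l :: nat assume h: "l < n \<and> even (n - l)"
  then obtain a where a: "n = 2*a + 0 + l" using valid_iff[of 0 l n] by auto
  have a1: "1 \<le> a" using a h by simp
  have S: "int (S2 n l) = Bf a a l" using S2_FN[of n l] FN_val[of a 0 l] a by simp
  have d1: "(n + l) div 2 = a + l" "(n - l) div 2 = a" "n - l = 2 * a" using a by auto
  have k: "int a * Bf a a l = int (a+l choose (a+1)) * int (a+l-1 choose (a-1))" using K1[OF a1] .
  have k': "real a * real (S2 n l) = real (a+l choose (a+1)) * real (a+l-1 choose (a-1))"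
  proof -
    have "int a * int (S2 n l) = int (a+l choose (a+1)) * int (a+l-1 choose (a-1))" using k S by simp
    then have "int (a * S2 n l) = int ((a+l choose (a+1)) * (a+l-1 choose (a-1)))" by simp
    then have "a * S2 n l = (a+l choose (a+1)) * (a+l-1 choose (a-1))" by (simp only: of_nat_eq_iff)
    then show ?thesis by (metis of_nat_mult)
  qed
  have ap: "real a > 0" using a1 by simp
  show "real (S2 n l) = 2 / real (n - l)
              * real (((n + l) div 2) choose ((n - l) div 2 + 1))
              * real (((n + l) div 2 - 1) choose ((n - l) div 2 - 1))"
    unfolding d1 using k' ap by (simp add: field_simps)
next
  fix n l :: nat assume n2: "2 \<le> n"
  show "(int n - int l) * (int n - int l + 2) * int (S2 n l)
            - (int n + int l) * (int n + int l - 2) * int (S2 (n - 2) l) = 0"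
  proof (cases "\<exists>a. n = 2*a + 0 + l")
    case True
    then obtain a where a: "n = 2*a + 0 + l" by blast
    show ?thesis
    proof (cases a)
      case 0
      then have "\<not> (\<exists>b. n - 2 = 2*b + 0 + l)" using a n2 by auto
      then have "S2 (n-2) l = 0" using S2_FN[of "n-2" l] FN_inv by simp
      then show ?thesis using a 0 by simp
    next
      case (Suc b)
      have s1: "int (S2 n l) = Bf (Suc b) (Suc b) l" using S2_FN[of n l] FN_val[of "Suc b" 0 l] a Suc by simp
      have "n - 2 = 2*b + 0 + l" using a Suc by simp
      then have s2: "int (S2 (n-2) l) = Bf b b l" using S2_FN[of "n-2" l] FN_val[of b 0 l] by simp
      have "(int n - int l) * (int n - int l + 2) * int (S2 n l) = 4 * (int (Suc b) * int (Suc b + 1) * Bf (Suc b) (Suc b) l)"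
        using a Suc s1 by (simp add: algebra_simps)
      also have "\<dots> = 4 * (int (Suc b + l) * int (b + l) * Bf b b l)" using K2[of b l] by simp
      also have "\<dots> = (int n + int l) * (int n + int l - 2) * int (S2 (n - 2) l)"
        using a Suc s2 by (simp add: algebra_simps)
      finally show ?thesis by simp
    qed
  next
    case False
    have "\<not> (\<exists>b. n - 2 = 2*b + 0 + l)"
    proof
      assume "\<exists>b. n - 2 = 2*b + 0 + l"
      then obtain b where "n - 2 = 2*b + 0 + l" by blast
      then have "n = 2*(Suc b) + 0 + l" using n2 by simp
      then show False using False by blast
    qed
    then have "S2 (n-2) l = 0" using S2_FN[of "n-2" l] FN_inv by simp
    moreover have "S2 n l = 0" using S2_FN[of n l] FN_inv False by simp
    ultimately show ?thesis by simp
  qed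
qed

end
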